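(* Let $\mathcal{F}$ be a free filter on $\omega$ and let $\kappa$ be a cardinal with $\omega\le\kappa\le\mathfrak{c}$. Then $C_p(X_{\mathcal{F},\kappa})$ is separable.
   Context: A filter on $\omega$ is free if it contains all cofinite sets. $\mathfrak{c}=2^{\aleph_0}$. $X_{\mathcal{F},\kappa}$ is the space $(\kappa\times\omega)\cup\{\infty\}$ in which every point of $\kappa\times\omega$ is isolated and the neighborhoods of $\infty$ are the sets of the form $\{\infty\}\cup\bigcup\{\{\alpha\}\times A_\alpha:\alpha<\kappa\}$ with $A_\alpha\in\mathcal{F}$ for all $\alpha<\kappa$. $C_p(X)$ is the space of continuous functions $X\to\mathbb{R}$ with the topology of pointwise convergence. *)

theory Defs
  imports "HOL-Analysis.Analysis"
begin

text \<open>The space X_{F,kappa}: points are None (the point infinity) and Some (alpha, n)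
  for alpha in the index type 'k (of cardinality kappa) and n in omega.\<close>

definition XFk :: "nat filter \<Rightarrow> (('k \<times> nat) option) topology" where
  "XFk F = topology (\<lambda>U. None \<in> U \<longrightarrow>
     (\<exists>A :: 'k \<Rightarrow> nat set. (\<forall>\<alpha>. eventually (\<lambda>n. n \<in> A \<alpha>) F) \<and>
        insert None {Some (\<alpha>, n) | \<alpha> n. n \<in> A \<alpha>} \<subseteq> U))"

lemma istopology_XFk:
  "istopology (\<lambda>U. None \<in> U \<longrightarrow>
     (\<exists>A :: 'k \<Rightarrow> nat set. (\<forall>\<alpha>. eventually (\<lambda>n. n \<in> A \<alpha>) F) \<and>
        insert None {Some (\<alpha>, n) | \<alpha> n. n \<in> A \<alpha>} \<subseteq> U))"
proof -
  have int: "\<exists>C. (\<forall>\<alpha>. eventually (\<lambda>n. n \<in> C \<alpha>) F) \<and>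
        insert None {Some (\<alpha>, n) | \<alpha> n. n \<in> C \<alpha>} \<subseteq> S \<inter> T"
    if "\<forall>\<alpha>. eventually (\<lambda>n. n \<in> A \<alpha>) F"
        "insert None {Some (\<alpha>, n) | \<alpha> n. n \<in> A \<alpha>} \<subseteq> S"
       "\<forall>\<alpha>. eventually (\<lambda>n. n \<in> B \<alpha>) F"
        "insert None {Some (\<alpha>, n) | \<alpha> n. n \<in> B \<alpha>} \<subseteq> T"
    for A B :: "'k \<Rightarrow> nat set" and S T :: "('k \<times> nat) option set"
    by (rule exI[of _ "\<lambda>\<alpha>. A \<alpha> \<inter> B \<alpha>"]) (use that in \<open>auto intro: eventually_conj\<close>)
  show ?thesis
    unfolding istopology_def
  proof (intro conjI allI impI)
    fix S T :: "('k \<times> nat) option set"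
    assume "None \<in> S \<longrightarrow> (\<exists>A :: 'k \<Rightarrow> nat set. (\<forall>\<alpha>. eventually (\<lambda>n. n \<in> A \<alpha>) F) \<and>
        insert None {Some (\<alpha>, n) | \<alpha> n. n \<in> A \<alpha>} \<subseteq> S)"
      and "None \<in> T \<longrightarrow> (\<exists>A :: 'k \<Rightarrow> nat set. (\<forall>\<alpha>. eventually (\<lambda>n. n \<in> A \<alpha>) F) \<and>
        insert None {Some (\<alpha>, n) | \<alpha> n. n \<in> A \<alpha>} \<subseteq> T)"
      and "None \<in> S \<inter> T"
    then show "\<exists>A :: 'k \<Rightarrow> nat set. (\<forall>\<alpha>. eventually (\<lambda>n. n \<in> A \<alpha>) F) \<and>
        insert None {Some (\<alpha>, n) | \<alpha> n. n \<in> A \<alpha>} \<subseteq> S \<inter> T"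
      using int by (meson IntD1 IntD2)
  next
    fix K :: "('k \<times> nat) option set set"
    assume K: "\<forall>S\<in>K. None \<in> S \<longrightarrow> (\<exists>A :: 'k \<Rightarrow> nat set. (\<forall>\<alpha>. eventually (\<lambda>n. n \<in> A \<alpha>) F) \<and>
        insert None {Some (\<alpha>, n) | \<alpha> n. n \<in> A \<alpha>} \<subseteq> S)" and "None \<in> \<Union>K"
    then obtain S where "S \<in> K" "None \<in> S" by blast
    with K obtain A :: "'k \<Rightarrow> nat set" where "\<forall>\<alpha>. eventually (\<lambda>n. n \<in> A \<alpha>) F"
        "insert None {Some (\<alpha>, n) | \<alpha> n. n \<in> A \<alpha>} \<subseteq> S" by blast
    with \<open>S \<in> K\<close> show "\<exists>A :: 'k \<Rightarrow> nat set. (\<forall>\<alpha>. eventually (\<lambda>n. n \<in> A \<alpha>) F) \<and>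
        insert None {Some (\<alpha>, n) | \<alpha> n. n \<in> A \<alpha>} \<subseteq> \<Union>K" by blast
  qed
qed

definition Cp :: "'a topology \<Rightarrow> ('a \<Rightarrow> real) topology" where
  "Cp X = subtopology (product_topology (\<lambda>_. euclideanreal) (topspace X))
            {f \<in> topspace (product_topology (\<lambda>_. euclideanreal) (topspace X)).
               continuous_map X euclideanreal f}"

definition free_filter :: "nat filter \<Rightarrow> bool" where
  "free_filter F \<longleftrightarrow> F \<noteq> bot \<and> (\<forall>A. finite (UNIV - A) \<longrightarrow> eventually (\<lambda>n. n \<in> A) F)"

end

theory Submission
  imports Defs
begin

definition bt :: "('k \<Rightarrow> real) \<Rightarrow> nat \<Rightarrow> 'k \<Rightarrow> rat \<times> rat \<times> nat \<times> rat \<Rightarrow> real" where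
  "bt g n \<alpha> z = (case z of (a, b, m, q) \<Rightarrow>
     (if m = n \<and> of_rat a < g \<alpha> \<and> g \<alpha> < of_rat b then of_rat q else 0))"

definition dd :: "('k \<Rightarrow> real) \<Rightarrow> rat \<Rightarrow> (rat \<times> rat \<times> nat \<times> rat) list \<Rightarrow> ('k \<times> nat) option \<Rightarrow> real" where
  "dd g c L x = (case x of None \<Rightarrow> of_rat c
      | Some p \<Rightarrow> of_rat c + sum_list (map (bt g (snd p) (fst p)) L))"

lemma openin_XFk:
  "openin (XFk F) U \<longleftrightarrow> (None \<in> U \<longrightarrow>
     (\<exists>A :: 'k \<Rightarrow> nat set. (\<forall>\<alpha>. eventually (\<lambda>n. n \<in> A \<alpha>) F) \<and>
        insert None {Some (\<alpha>, n) | \<alpha> n. n \<in> A \<alpha>} \<subseteq> U))"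
  unfolding XFk_def by (subst topology_inverse'[OF istopology_XFk]) (rule refl)

lemma topspace_XFk: "topspace (XFk F :: ('k \<times> nat) option topology) = UNIV"
proof -
  have "openin (XFk F :: ('k \<times> nat) option topology) UNIV"
    unfolding openin_XFk by (rule impI, rule exI[of _ "\<lambda>_. UNIV"]) auto
  then show ?thesis using openin_subset by blast
qed

lemma bt_eventually_zero: "\<exists>N. \<forall>n\<ge>N. \<forall>\<alpha>. sum_list (map (bt g n \<alpha>) L) = 0"
proof (induction L)
  case Nil then show ?case by auto
next
  case (Cons z L)
  then obtain N where N: "\<forall>n\<ge>N. \<forall>\<alpha>. sum_list (map (bt g n \<alpha>) L) = 0" by blast
  obtain a b m q where z: "z = (a, b, m, q)" by (cases z) auto
  have bz: "bt g n \<alpha> z = 0" if "n \<ge> Suc m" for n \<alpha> using that by (simp add: z bt_def)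
  show ?case
    by (rule exI[of _ "max N (Suc m)"]) (simp add: N bz)
qed

lemma dd_cont:
  assumes "free_filter F"
  shows "continuous_map (XFk F) euclideanreal (dd g c L)"
proof -
  obtain N where N: "\<forall>n\<ge>N. \<forall>\<alpha>. sum_list (map (bt g n \<alpha>) L) = 0"
    using bt_eventually_zero by blast
  have ff: "\<forall>A. finite (UNIV - A) \<longrightarrow> eventually (\<lambda>n. n \<in> A) F"
    using assms unfolding free_filter_def by blast
  have "UNIV - {N..} = {..<N}" by auto
  then have "finite (UNIV - {N..})" by simp
  then have ev: "eventually (\<lambda>n. n \<in> {N..}) F" using ff by blast
  show ?thesis
    unfolding continuous_map_def topspace_XFk
  proof (intro conjI allI impI)
    fix U :: "real set"
    assume "openin euclideanreal U"
    show "openin (XFk F) {x \<in> UNIV. dd g c L x \<in> U}"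
      unfolding openin_XFk
    proof
      assume "None \<in> {x \<in> UNIV. dd g c L x \<in> U}"
      then have cU: "of_rat c \<in> U" by (simp add: dd_def)
      show "\<exists>A. (\<forall>\<alpha>. eventually (\<lambda>n. n \<in> A \<alpha>) F) \<and>
        insert None {Some (\<alpha>, n) | \<alpha> n. n \<in> A \<alpha>} \<subseteq> {x \<in> UNIV. dd g c L x \<in> U}"
        by (rule exI[of _ "\<lambda>_. {N..}"]) (use ev cU N in \<open>auto simp: dd_def\<close>)
    qed
  qed auto
qed

lemma core:
  fixes g :: "'k \<Rightarrow> real" and f :: "('k \<times> nat) option \<Rightarrow> real"
  assumes "inj g" "finite S" "\<And>x. e x > 0" "\<bar>of_rat c - f None\<bar> < e None"
  shows "\<exists>L. \<forall>x\<in>S. \<bar>dd g c L x - f x\<bar> < e x"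
  using assms(2)
proof (induction S rule: finite_induct)
  case empty then show ?case by auto
next
  case (insert x S)
  then obtain L where L: "\<forall>y\<in>S. \<bar>dd g c L y - f y\<bar> < e y" by blast
  show ?case
  proof (cases x)
    case None
    then show ?thesis using L assms(4) by (auto simp: dd_def)
  next
    case (Some p)
    obtain \<alpha>0 n0 where p: "p = (\<alpha>0, n0)" by (cases p)
    define G0 where "G0 = {g \<alpha> | \<alpha> n. Some (\<alpha>, n) \<in> S \<and> \<alpha> \<noteq> \<alpha>0}"
    have "G0 \<subseteq> (\<lambda>y. g (fst (the y))) ` S" unfolding G0_def by force
    then have finG0: "finite G0" using insert(1) finite_subset by blast
    have notin: "g \<alpha>0 \<notin> G0" unfolding G0_def using assms(1) by (auto dest: injD)
    have "open (- G0)" using finG0 by (simp add: finite_imp_closed open_Compl)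
    then obtain r where r: "r > 0" "ball (g \<alpha>0) r \<subseteq> - G0"
      using notin open_contains_ball by blast
    obtain a' where a': "a' \<in> \<rat>" "g \<alpha>0 - r < a'" "a' < g \<alpha>0"
      using Rats_dense_in_real[of "g \<alpha>0 - r" "g \<alpha>0"] r by auto
    obtain b' where b': "b' \<in> \<rat>" "g \<alpha>0 < b'" "b' < g \<alpha>0 + r"
      using Rats_dense_in_real[of "g \<alpha>0" "g \<alpha>0 + r"] r by auto
    obtain a where a: "a' = of_rat a" using a' Rats_cases by blast
    obtain b where b: "b' = of_rat b" using b' Rats_cases by blast
    define t where "t = f x - dd g c L x"
    obtain q' where q': "q' \<in> \<rat>" "t - e x < q'" "q' < t + e x"
      using Rats_dense_in_real[of "t - e x" "t + e x"] assms(3)[of x] by auto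
    obtain q where q: "q' = of_rat q" using q' Rats_cases by blast
    define L' where "L' = (a, b, n0, q) # L"
    have "\<forall>y\<in>S. dd g c L' y = dd g c L y"
    proof
      fix y assume y: "y \<in> S"
      show "dd g c L' y = dd g c L y"
      proof (cases y)
        case None then show ?thesis by (simp add: dd_def)
      next
        case (Some p')
        obtain \<alpha> n where p': "p' = (\<alpha>, n)" by (cases p')
        have "bt g n \<alpha> (a, b, n0, q) = 0"
        proof (cases "n = n0")
          case True
          then have "\<alpha> \<noteq> \<alpha>0" using y insert(2) Some p' \<open>x = Some p\<close> p by auto
          then have "g \<alpha> \<in> G0" unfolding G0_def using y Some p' by blast
          then have "g \<alpha> \<notin> ball (g \<alpha>0) r" using r by blast
          then have "\<not> (a' < g \<alpha> \<and> g \<alpha> < b')" using a' b'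
            by (auto simp: dist_real_def)
          then show ?thesis unfolding bt_def using a b by auto
        next
          case False then show ?thesis by (simp add: bt_def)
        qed
        then show ?thesis by (simp add: dd_def L'_def Some p')
      qed
    qed
    moreover have "bt g n0 \<alpha>0 (a, b, n0, q) = q'"
      unfolding bt_def using a b q a' b' by auto
    then have "dd g c L' x = dd g c L x + q'"
      by (simp add: dd_def L'_def \<open>x = Some p\<close> p)
    then have "\<bar>dd g c L' x - f x\<bar> < e x" using q' unfolding t_def by auto
    ultimately show ?thesis using L by (intro exI[of _ L']) auto
  qed
qed

theorem mainTheorem15:
  fixes F :: "nat filter"
  assumes "free_filter F"
    and "infinite (UNIV :: 'k set)"
    and "\<exists>g :: 'k \<Rightarrow> real. inj g"
  shows "separable_space (Cp (XFk F :: ('k \<times> nat) option topology))"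
proof -
  obtain g :: "'k \<Rightarrow> real" where g: "inj g" using assms(3) by blast
  define P where "P = product_topology (\<lambda>_. euclideanreal) (topspace (XFk F :: ('k \<times> nat) option topology))"
  define M where "M = {f \<in> topspace P. continuous_map (XFk F :: ('k \<times> nat) option topology) euclideanreal f}"
  have Cp: "Cp (XFk F :: ('k \<times> nat) option topology) = subtopology P M"
    unfolding Cp_def P_def M_def by simp
  have tP: "topspace P = UNIV" unfolding P_def topspace_XFk by (simp add: PiE_UNIV_domain)
  define C where "C = range (\<lambda>(c, L). dd g c L)"
  have cC: "countable C" unfolding C_def by simp
  have CM: "C \<subseteq> M" unfolding C_def M_def tP using dd_cont[OF assms(1)] by auto
  have tC: "topspace (subtopology P M) = M" unfolding M_def by auto
  have "subtopology P M closure_of C = M"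
  proof
    show "subtopology P M closure_of C \<subseteq> M"
      using closure_of_subset_topspace tC by metis
  next
    show "M \<subseteq> subtopology P M closure_of C"
    proof
      fix f assume fM: "f \<in> M"
      show "f \<in> subtopology P M closure_of C"
        unfolding in_closure_of tC
      proof (intro conjI allI impI fM)
        fix T assume "f \<in> T \<and> openin (subtopology P M) T"
        then obtain U where U: "openin P U" "T = U \<inter> M" "f \<in> U"
          by (auto simp: openin_subtopology)
        then obtain V where V: "finite {i \<in> UNIV. V i \<noteq> UNIV}"
            "\<forall>i. open (V i)" "f \<in> Pi\<^sub>E UNIV V" "Pi\<^sub>E UNIV V \<subseteq> U"
          unfolding P_def openin_product_topology_alt topspace_XFk by auto
        have "\<forall>i. \<exists>e>0. ball (f i) e \<subseteq> V i"
          proof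
          fix i
          have "f i \<in> V i" using V(3) by (auto simp: PiE_iff)
          then show "\<exists>e>0. ball (f i) e \<subseteq> V i"
            using open_contains_ball_eq[OF V(2)[rule_format, of i]] by blast
        qed
        then obtain e where e: "\<And>i. e i > 0" "\<And>i. ball (f i) (e i) \<subseteq> V i" by metis
        obtain c' where c': "c' \<in> \<rat>" "f None - e None < c'" "c' < f None + e None"
          using Rats_dense_in_real[of "f None - e None" "f None + e None"] e(1)[of None] by auto
        obtain c where c: "c' = of_rat c" using c' Rats_cases by blast
        have "\<bar>of_rat c - f None\<bar> < e None" using c c' by auto
        from core[where e=e and f=f, OF g V(1) e(1) this] obtain L where
          L: "\<forall>x\<in>{i. V i \<noteq> UNIV}. \<bar>dd g c L x - f x\<bar> < e x" by auto
        have "\<forall>i. dd g c L i \<in> V i"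
        proof
          fix i show "dd g c L i \<in> V i"
          proof (cases "V i = UNIV")
            case False
            then have "dd g c L i \<in> ball (f i) (e i)" using L by (auto simp: dist_real_def)
            then show ?thesis using e(2) by blast
          qed auto
        qed
        then have "dd g c L \<in> Pi\<^sub>E UNIV V" by (simp add: PiE_UNIV_domain)
        moreover have ddC: "dd g c L \<in> C" unfolding C_def
          by (rule range_eqI[of _ _ "(c, L)"]) simp
        ultimately have "dd g c L \<in> T" using V(4) U(2) CM by auto
        with ddC show "\<exists>y. y \<in> C \<and> y \<in> T" by blast
      qed
    qed
  qed
  then show ?thesis
    unfolding separable_space_def Cp using cC CM tC by metis
qed

end
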